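(* Let $\beta>0$, $k_d>0$, $N$ constant and $t>0$. Let $(x,y)=r(\cos\phi,\sin\phi)$ with $r>0$, and set $\alpha=\beta rt$ and $\gamma=\cos(\phi/2)$. Let $$\psi_G=-\frac{N}{2\pi}\int_0^\infty\frac{k}{k^2+k_d^2}J_0\!\left(\left[\left(kx+\frac{\beta kt}{k^2+k_d^2}\right)^2+k^2y^2\right]^{1/2}\right)dk.$$ For $z\ge0$ define $$\delta_1(z)=1-\frac{k_d^2r^2}{\alpha(\sqrt{z^2+1}-z)^2},\qquad \delta_2(z)=1-\frac{k_d^2r^2}{\alpha(\sqrt{z^2+1}+z)^2},$$ and $$A_j(z)=\left[4\alpha\,\delta_j(z)\,(z^2+\gamma^2)\right]^{1/2},\qquad j=1,2.$$ (i) Near region, $r<\beta t/k_d^2$. Set $z_{01}=(\alpha-k_d^2r^2)/(\sqrt{4\alpha}\,k_dr)>0$. Then $$\psi_G=-\frac{N}{2\pi}\left(\int_0^{z_{01}}\frac{J_0(A_1(z))}{\sqrt{z^2+1}}dz+\int_0^{\infty}\frac{J_0(A_2(z))}{\sqrt{z^2+1}}dz\right)=-\frac{N}{2\pi}\int_{-z_{01}}^\infty\frac{J_0(A_2(z))}{\sqrt{z^2+1}}dz,$$ where in the last integral $\delta_2$ and $A_2$ are given by the same formulas for negative $z$. (ii) Far region, $r>\beta t/k_d^2$. Set $z_{02}=(k_d^2r^2-\alpha)/(\sqrt{4\alpha}\,k_dr)>0$. Then $$\psi_G=-\frac{N}{2\pi}\int_{z_{02}}^\infty\frac{J_0(A_2(z))}{\sqrt{z^2+1}}dz.$$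 In both cases the change of variables is $z=|(k^2+k_d^2)r^2-\alpha|/(2\sqrt{\alpha(k^2+k_d^2)r^2})$. Its inverse is $(k^2+k_d^2)r^2=\alpha(\sqrt{z^2+1}\mp z)^2$, with the minus sign for $k^2<\beta t/r-k_d^2$ and the plus sign otherwise.
   Context: $J_0$ is the Bessel function of the first kind of order zero. $\psi_G$ is the no-wind Rossby wave Green's function with inverse deformation radius $k_d$. *)

theory Defs
  imports "HOL-Analysis.Analysis"
begin

definition bessel_J0 :: "real \<Rightarrow> real" where
  "bessel_J0 x = (\<Sum>m. (-1)^m / (fact m)^2 * (x/2)^(2*m))"

definition psi_G_integrand :: "real \<Rightarrow> real \<Rightarrow> real \<Rightarrow> real \<Rightarrow> real \<Rightarrow> real \<Rightarrow> real" where
  "psi_G_integrand beta kd t x y k =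
     k / (k^2 + kd^2) *
     bessel_J0 (sqrt ((k*x + beta*k*t / (k^2 + kd^2))^2 + k^2 * y^2))"

definition psi_G :: "real \<Rightarrow> real \<Rightarrow> real \<Rightarrow> real \<Rightarrow> real \<Rightarrow> real \<Rightarrow> real" where
  "psi_G N beta kd t x y =
     - (N / (2*pi)) * (LBINT k:{0..}. psi_G_integrand beta kd t x y k)"

text \<open>Auxiliary functions delta_1, delta_2, A_1, A_2 (alpha = beta r t, gamma = cos(phi/2)).\<close>
definition delta1 :: "real \<Rightarrow> real \<Rightarrow> real \<Rightarrow> real \<Rightarrow> real" where
  "delta1 alpha kd r z = 1 - kd^2 * r^2 / (alpha * (sqrt (z^2 + 1) - z)^2)"

definition delta2 :: "real \<Rightarrow> real \<Rightarrow> real \<Rightarrow> real \<Rightarrow> real" where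
  "delta2 alpha kd r z = 1 - kd^2 * r^2 / (alpha * (sqrt (z^2 + 1) + z)^2)"

definition A1 :: "real \<Rightarrow> real \<Rightarrow> real \<Rightarrow> real \<Rightarrow> real \<Rightarrow> real" where
  "A1 alpha gamma kd r z = sqrt (4 * alpha * delta1 alpha kd r z * (z^2 + gamma^2))"

definition A2 :: "real \<Rightarrow> real \<Rightarrow> real \<Rightarrow> real \<Rightarrow> real \<Rightarrow> real" where
  "A2 alpha gamma kd r z = sqrt (4 * alpha * delta2 alpha kd r z * (z^2 + gamma^2))"

end

theory Submission
  imports Defs "HOL-Real_Asymp.Real_Asymp"
begin

definition jc :: "nat \<Rightarrow> real" where "jc m = (-1)^m / (fact m)^2"
definition jP :: "real \<Rightarrow> real" where "jP w = (\<Sum>n. jc n * w^n)"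
definition jP1 :: "real \<Rightarrow> real" where "jP1 w = (\<Sum>n. diffs jc n * w^n)"
definition jP2 :: "real \<Rightarrow> real" where "jP2 w = (\<Sum>n. diffs (diffs jc) n * w^n)"

lemma jc_summable: "summable (\<lambda>n. jc n * y^n)"
proof (rule summable_comparison_test[OF _ summable_exp[of "\<bar>y\<bar>"]])
  show "\<exists>N. \<forall>n\<ge>N. norm (jc n * y ^ n) \<le> inverse (fact n) * \<bar>y\<bar> ^ n"
  proof (intro exI allI impI)
    fix n :: nat
    have f1: "(1::real) \<le> fact n" by simp
    have "\<bar>jc n\<bar> = 1 / (fact n)^2" by (simp add: jc_def abs_mult)
    also have "\<dots> \<le> inverse (fact n)"
      using f1 by (simp add: power2_eq_square field_simps)
    finally show "norm (jc n * y ^ n) \<le> inverse (fact n) * \<bar>y\<bar> ^ n"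
      by (simp add: abs_mult power_abs mult_right_mono)
  qed
qed

lemma jc1_summable: "summable (\<lambda>n. diffs jc n * y^n)"
  by (rule termdiff_converges_all) (rule jc_summable)
lemma jc2_summable: "summable (\<lambda>n. diffs (diffs jc) n * y^n)"
  by (rule termdiff_converges_all) (rule jc1_summable)

lemma jP_deriv: "(jP has_real_derivative jP1 w) (at w)"
  unfolding jP_def jP1_def by (rule termdiffs_strong_converges_everywhere) (rule jc_summable)
lemma jP1_deriv: "(jP1 has_real_derivative jP2 w) (at w)"
  unfolding jP1_def jP2_def by (rule termdiffs_strong_converges_everywhere) (rule jc1_summable)

lemma jc_rec: "jc (Suc n) = - jc n / (real (Suc n))^2"
  by (simp add: jc_def field_simps power2_eq_square)

lemma jP_ode: "w * jP2 w + jP1 w + jP w = 0"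
proof -
  define S where "S n = (jc n + diffs jc n) * w^n" for n
  have S0: "S 0 = 0" by (simp add: S_def diffs_def jc_def)
  have SS: "S (Suc n) = - (w * (diffs (diffs jc) n * w^n))" for n
  proof -
    have "jc (Suc n) + diffs jc (Suc n) = - (diffs (diffs jc) n)"
    proof -
      have d: "(real n + 2)^2 \<noteq> 0" by simp
      show ?thesis unfolding diffs_def jc_rec[of "Suc n"]
        using d by (simp add: divide_simps) (simp add: algebra_simps power2_eq_square)
    qed
    then show ?thesis by (simp add: S_def)
  qed
  have "(\<lambda>n. w * (diffs (diffs jc) n * w^n)) sums (w * jP2 w)"
    unfolding jP2_def by (intro sums_mult summable_sums jc2_summable)
  then have "(\<lambda>n. S (Suc n)) sums (- (w * jP2 w))"
    unfolding SS by (rule sums_minus)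
  then have "S sums (- (w * jP2 w))"
    using sums_Suc_iff[of S] S0 by simp
  moreover have "S sums (jP w + jP1 w)"
    unfolding S_def jP_def jP1_def distrib_right
    by (intro sums_add summable_sums jc_summable jc1_summable)
  ultimately show ?thesis using sums_unique2 by force
qed

lemma J0_eq: "bessel_J0 x = jP ((x/2)^2)"
  unfolding bessel_J0_def jP_def jc_def by (simp add: power_mult)


definition J0d :: "real \<Rightarrow> real" where "J0d x = jP1 ((x/2)^2) * (x/2)"
definition J0dd :: "real \<Rightarrow> real" where
  "J0dd x = jP2 ((x/2)^2) * (x/2) * (x/2) + jP1 ((x/2)^2) / 2"

lemma J0_deriv: "(bessel_J0 has_real_derivative J0d x) (at x)"
proof -
  have "((\<lambda>x. jP ((x/2)^2)) has_real_derivative jP1 ((x/2)^2) * (2 * (x/2) * (1/2))) (at x)"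
    by (rule DERIV_chain2[OF jP_deriv]) (auto intro!: derivative_eq_intros)
  then show ?thesis unfolding J0d_def by (simp add: J0_eq[abs_def])
qed

lemma J0d_deriv: "(J0d has_real_derivative J0dd x) (at x)"
proof -
  have "((\<lambda>x. jP1 ((x/2)^2)) has_real_derivative jP2 ((x/2)^2) * (2 * (x/2) * (1/2))) (at x)"
    by (rule DERIV_chain2[OF jP1_deriv]) (auto intro!: derivative_eq_intros)
  then have "((\<lambda>x. jP1 ((x/2)^2) * (x/2)) has_real_derivative
     jP2 ((x/2)^2) * (2 * (x/2) * (1/2)) * (x/2) + jP1 ((x/2)^2) * (1/2)) (at x)"
    by (auto intro!: derivative_eq_intros)
  then show ?thesis unfolding J0d_def[abs_def] J0dd_def by simp
qed

lemma J0_ode: "x * J0dd x + J0d x + x * bessel_J0 x = 0"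
proof -
  have "x * J0dd x + J0d x + x * bessel_J0 x
      = x * ((x/2)^2 * jP2 ((x/2)^2) + jP1 ((x/2)^2) + jP ((x/2)^2))"
    unfolding J0dd_def J0d_def J0_eq by (simp add: algebra_simps power2_eq_square)
  then show ?thesis using jP_ode by simp
qed

lemma energy_generic:
  fixes y y1 y2 :: "real \<Rightarrow> real"
  assumes d1: "\<And>x. (y has_real_derivative y1 x) (at x)"
    and d2: "\<And>x. (y1 has_real_derivative y2 x) (at x)"
    and ode: "\<And>x. x * y2 x + y1 x + x * y x = 0"
    and x: "1 \<le> x"
  shows "x * (y x)^2 \<le> (y 1)^2 + (y1 1)^2 + y 1 * y1 1 + (y 1)^2 / 2"
proof -
  define H where "H x = x * ((y x)^2 + (y1 x)^2) + y x * y1 x + (y x)^2 / (2*x)" for x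
  have "H x \<le> H 1"
  proof (rule DERIV_nonpos_imp_nonincreasing[OF x])
    fix t assume t: "1 \<le> t" "t \<le> x"
    have D: "(H has_real_derivative
        ((y t)^2 + (y1 t)^2) + t * (2 * y t * y1 t + 2 * y1 t * y2 t)
        + (y1 t * y1 t + y t * y2 t)
        + ((2 * y t * y1 t) * (2*t) - (y t)^2 * 2) / (2*t)^2) (at t)"
      unfolding H_def[abs_def] using t
      by (auto intro!: derivative_eq_intros d1 d2 simp: power2_eq_square)
    have y2: "y2 t = - y t - y1 t / t" using ode[of t] t by (simp add: field_simps)
    have "((y t)^2 + (y1 t)^2) + t * (2 * y t * y1 t + 2 * y1 t * y2 t)
        + (y1 t * y1 t + y t * y2 t)
        + ((2 * y t * y1 t) * (2*t) - (y t)^2 * 2) / (2*t)^2 = - ((y t)^2 / (2 * t^2))"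
      unfolding y2 using t by (simp add: field_simps power2_eq_square)
    moreover have "- ((y t)^2 / (2 * t^2)) \<le> 0" by simp
    ultimately show "\<exists>d. (H has_real_derivative d) (at t) \<and> d \<le> 0" using D by metis
  qed
  moreover have "x * (y x)^2 \<le> H x"
  proof -
    have "0 \<le> x * (y1 x + y x / (2*x))^2 + (y x)^2 / (4*x)" using x by simp
    also have "\<dots> = H x - x * (y x)^2" unfolding H_def using x
      by (simp add: field_simps power2_eq_square)
    finally show ?thesis by simp
  qed
  ultimately show ?thesis unfolding H_def by simp
qed

lemma J0_decay: "\<exists>C. \<forall>x\<ge>1. \<bar>bessel_J0 x\<bar> \<le> C / sqrt x"
proof -
  define C0 where "C0 = (bessel_J0 1)^2 + (J0d 1)^2 + bessel_J0 1 * J0d 1 + (bessel_J0 1)^2 / 2"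
  have E: "x * (bessel_J0 x)^2 \<le> C0" if "1 \<le> x" for x
    unfolding C0_def by (rule energy_generic[OF J0_deriv J0d_deriv J0_ode that])
  show ?thesis
  proof (intro exI allI impI)
    fix x :: real assume x: "1 \<le> x"
    have C0: "0 \<le> C0" using E[of 1] zero_le_power2[of "bessel_J0 1"] by linarith
    have "(sqrt x * \<bar>bessel_J0 x\<bar>)^2 \<le> (sqrt C0)^2"
      using E[OF x] x C0 by (simp add: power_mult_distrib)
    then have "sqrt x * \<bar>bessel_J0 x\<bar> \<le> sqrt C0"
      by (rule power2_le_imp_le) (use C0 in simp)
    then show "\<bar>bessel_J0 x\<bar> \<le> sqrt C0 / sqrt x" using x by (simp add: field_simps)
  qed
qed

lemma J0_cont: "isCont bessel_J0 x"
  using J0_deriv DERIV_isCont by blast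

lemma continuous_on_J0[continuous_intros]:
  "continuous_on S f \<Longrightarrow> continuous_on S (\<lambda>x. bessel_J0 (f x))"
  using continuous_on_compose2[of UNIV bessel_J0 S f] J0_cont
  by (auto intro: continuous_at_imp_continuous_on)


lemma tail_integrable:
  assumes "k0 > (0::real)"
  shows "set_integrable lborel {k0..} (\<lambda>k. 1 / (k * sqrt k))"
proof -
  have "set_integrable lborel (einterval (ereal k0) \<infinity>) (\<lambda>k. 1 / (k * sqrt k))"
  proof (rule interval_integral_FTC_nonneg(1)[where F="\<lambda>k. - 2 / sqrt k" and A="- 2 / sqrt k0" and B=0])
    fix x assume "ereal k0 < ereal x" "ereal x < \<infinity>"
    then have x: "x > 0" using assms by simp
    show "((\<lambda>k. - 2 / sqrt k) has_real_derivative 1 / (x * sqrt x)) (at x)"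
      using x by (auto intro!: derivative_eq_intros simp: field_simps)
    show "isCont (\<lambda>k. 1 / (k * sqrt k)) x" using x by (auto intro!: continuous_intros)
  next
    show "AE x in lborel. ereal k0 < ereal x \<longrightarrow> ereal x < \<infinity> \<longrightarrow> 0 \<le> 1 / (x * sqrt x)"
      using assms by (auto intro!: AE_I2)
    show "(((\<lambda>k. - 2 / sqrt k) \<circ> real_of_ereal) \<longlongrightarrow> - 2 / sqrt k0) (at_right (ereal k0))"
      unfolding ereal_tendsto_simps using assms
      by (auto intro!: tendsto_eq_intros)
    show "(((\<lambda>k. - 2 / sqrt k) \<circ> real_of_ereal) \<longlongrightarrow> 0) (at_left \<infinity>)"
      unfolding ereal_tendsto_simps by real_asymp
  qed simp
  then have "set_integrable lborel {k0<..} (\<lambda>k. 1 / (k * sqrt k))" by simp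
  then show ?thesis
    by (subst set_integrable_discrete_difference[where X="{k0}" and B="{k0<..}"]) auto
qed


lemma psi_cont: "kd > 0 \<Longrightarrow> continuous_on S (psi_G_integrand beta kd t x y)"
  unfolding psi_G_integrand_def[abs_def]
  by (intro continuous_intros) (auto simp: add_pos_pos)

lemma psi_meas[measurable]: "kd > 0 \<Longrightarrow> psi_G_integrand beta kd t x y \<in> borel_measurable borel"
  by (rule borel_measurable_continuous_onI) (rule psi_cont)

lemma psi_integrable:
  fixes beta kd t r phi :: real
  assumes "beta > 0" "kd > 0" "t > 0" "r > 0"
  shows "set_integrable lborel {0..} (psi_G_integrand beta kd t (r * cos phi) (r * sin phi))"
proof -
  define x where "x = r * cos phi"
  define y where "y = r * sin phi"
  obtain C where C: "\<And>x. 1 \<le> x \<Longrightarrow> \<bar>bessel_J0 x\<bar> \<le> C / sqrt x" using J0_decay by blast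
  have C0: "0 \<le> C" using C[of 1] by simp
  define k0 where "k0 = max (sqrt (2 * beta * t / r)) (2 / r)"
  have k0: "k0 > 0" using assms by (simp add: k0_def max_def)
  define B where "B = C * sqrt 2 / sqrt r"
  let ?f = "psi_G_integrand beta kd t x y"
  have I1: "set_integrable lborel {0..k0} ?f"
    by (rule borel_integrable_atLeastAtMost') (rule psi_cont[OF assms(2)])
  have I2: "set_integrable lborel {k0..} ?f"
  proof (rule set_integrable_bound[where f="\<lambda>k. B * (1 / (k * sqrt k))"])
    show "set_integrable lborel {k0..} (\<lambda>k. B * (1 / (k * sqrt k)))"
      using tail_integrable[OF k0] by (rule set_integrable_mult_right)
    show "set_borel_measurable lborel {k0..} ?f"
      unfolding set_borel_measurable_def using psi_meas[OF assms(2)] by measurable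
    show "AE k in lborel. k \<in> {k0..} \<longrightarrow> norm (?f k) \<le> norm (B * (1 / (k * sqrt k)))"
    proof (rule AE_I2, intro impI)
      fix k assume "k \<in> {k0..}"
      then have kk: "k0 \<le> k" by simp
      have kpos: "k > 0" using k0 kk by simp
      define K where "K = k^2 + kd^2"
      have Kpos: "K > 0" using assms(2) by (simp add: K_def add_nonneg_pos)
      define c where "c = beta * t / K"
      have cpos: "c \<ge> 0" using assms Kpos by (simp add: c_def)
      have "sqrt (2 * beta * t / r) \<le> k" using kk by (simp add: k0_def)
      then have "2 * beta * t / r \<le> k^2"
        using assms by (metis real_sqrt_le_iff real_sqrt_pow2 zero_le_power2 abs_of_nonneg
              less_imp_le real_sqrt_abs divide_nonneg_pos mult_nonneg_nonneg zero_le_numeral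
              power2_le_imp_le real_sqrt_ge_0_iff real_sqrt_le_mono sqrt_le_D)
      then have "2 * beta * t / r \<le> K" unfolding K_def by (simp add: add_increasing2)
      then have cle: "c \<le> r / 2" using assms Kpos
        by (simp add: c_def field_simps)
      have r2: "2 / r \<le> k" using kk by (simp add: k0_def)
      have xy: "x^2 + y^2 = r^2" unfolding x_def y_def
        by (simp add: power_mult_distrib flip: distrib_left)
      have xr: "- r \<le> x" unfolding x_def using mult_left_mono[OF cos_ge_minus_one[of phi], of r] assms(4) by simp
      define a where "a = sqrt ((k*x + beta*k*t / (k^2 + kd^2))^2 + k^2 * y^2)"
      have arg: "(k*x + beta*k*t / (k^2 + kd^2))^2 + k^2 * y^2 = k^2 * ((x + c)^2 + y^2)"
        unfolding c_def K_def by (simp add: field_simps power2_eq_square)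
      have "(x + c)^2 + y^2 - (r - c)^2 = 2 * c * (x + r)"
        using xy by (simp add: power2_eq_square algebra_simps)
      moreover have "2 * c * (x + r) \<ge> 0" using cpos xr by simp
      ultimately have "(r - c)^2 \<le> (x + c)^2 + y^2" by simp
      moreover have "(r/2)^2 \<le> (r - c)^2" using cle cpos assms(4)
        by (intro power_mono) auto
      ultimately have "k^2 * (r/2)^2 \<le> k^2 * ((x + c)^2 + y^2)" by (intro mult_left_mono) auto
      then have "sqrt ((k * r / 2)^2) \<le> a" unfolding a_def arg
        by (intro real_sqrt_le_mono) (simp add: power_mult_distrib power_divide)
      then have age: "k * r / 2 \<le> a" using kpos assms(4) by simp
      have a1: "1 \<le> a" using age r2 assms(4) by (simp add: field_simps)
      have J: "\<bar>bessel_J0 a\<bar> \<le> C / sqrt (k * r / 2)"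
      proof -
        have "\<bar>bessel_J0 a\<bar> \<le> C / sqrt a" using C[OF a1] .
        also have "\<dots> \<le> C / sqrt (k * r / 2)"
          using age C0 kpos assms(4) a1 by (intro divide_left_mono) (auto intro!: mult_pos_pos)
        finally show ?thesis .
      qed
      have kK: "k / K \<le> 1 / k" using kpos Kpos unfolding K_def
        by (simp add: field_simps power2_eq_square)
      have "norm (?f k) = k / K * \<bar>bessel_J0 a\<bar>"
        unfolding psi_G_integrand_def a_def K_def using kpos Kpos[unfolded K_def]
        by (simp add: abs_mult)
      also have "\<dots> \<le> 1 / k * (C / sqrt (k * r / 2))"
        using kK J kpos Kpos by (intro mult_mono) auto
      also have "\<dots> = B * (1 / (k * sqrt k))"
        unfolding B_def using kpos assms(4)
        by (simp add: real_sqrt_mult real_sqrt_divide field_simps)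
      also have "\<dots> = norm (B * (1 / (k * sqrt k)))"
        using kpos C0 assms(4) by (simp add: B_def abs_mult)
      finally show "norm (?f k) \<le> norm (B * (1 / (k * sqrt k)))" .
    qed
  qed
  have "set_integrable lborel ({0..k0} \<union> {k0..}) ?f"
    by (rule set_integrable_Un[OF I1 I2]) auto
  moreover have "{0..k0} \<union> {k0..} = {0::real..}" using k0 by auto
  ultimately show ?thesis unfolding x_def y_def by simp
qed


lemma key_identity:
  fixes beta kd t r phi k :: real
  assumes "beta > 0" "kd > 0" "t > 0" "r > 0" "k \<ge> 0"
  defines "alpha \<equiv> beta * r * t" and "gamma \<equiv> cos (phi / 2)"
  defines "c \<equiv> r / sqrt alpha"
  defines "q \<equiv> sqrt (k^2 + kd^2)"
  defines "h \<equiv> (c * q - 1 / (c * q)) / 2"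
  defines "h' \<equiv> (c + 1 / (c * (k^2 + kd^2))) * (k / q) / 2"
  shows "bessel_J0 (A2 alpha gamma kd r h) / sqrt (h^2 + 1) * h'
       = psi_G_integrand beta kd t (r * cos phi) (r * sin phi) k"
proof -
  define K where "K = k^2 + kd^2"
  have Kpos: "K > 0" using assms(2) by (simp add: K_def add_nonneg_pos)
  have apos: "alpha > 0" using assms by (simp add: alpha_def)
  have qpos: "q > 0" using Kpos by (simp add: q_def K_def)
  have q2: "q^2 = K" using Kpos by (simp add: q_def K_def)
  have cpos: "c > 0" using apos assms(4) by (simp add: c_def)
  have c2: "c^2 = r^2 / alpha" using apos by (simp add: c_def power_divide)
  define s where "s = c * q"
  have spos: "s > 0" using cpos qpos by (simp add: s_def)
  have s2: "s^2 = r^2 * K / alpha" unfolding s_def using c2 q2 by (simp add: power_mult_distrib)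
  have hs: "h = (s - 1/s) / 2" by (simp add: h_def s_def)
  have sq: "sqrt (h^2 + 1) = (s + 1/s) / 2"
  proof -
    have "h^2 + 1 = ((s + 1/s) / 2)^2" unfolding hs using spos
      by (simp add: field_simps power2_eq_square)
    then have "sqrt (h^2 + 1) = sqrt (((s + 1/s) / 2)^2)" by (simp only:)
    also have "\<dots> = (s + 1/s) / 2" using spos by (simp only: real_sqrt_abs) simp
    finally show ?thesis .
  qed
  have sph: "sqrt (h^2 + 1) + h = s" unfolding sq unfolding hs by (simp add: field_simps)
  have d2: "delta2 alpha kd r h = k^2 / K"
    unfolding delta2_def sph s2 using apos Kpos assms(4) by (simp add: field_simps) (simp add: K_def)
  have g2: "gamma^2 = (1 + cos phi) / 2"
    using cos_double_cos[of "phi/2"] by (simp add: gamma_def)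
  have rad: "4 * alpha * delta2 alpha kd r h * (h^2 + gamma^2)
      = (k * (r * cos phi) + beta * k * t / (k^2 + kd^2))^2 + k^2 * (r * sin phi)^2"
  proof -
    have h2: "h^2 = (s^2 + 1 / s^2 - 2) / 4" unfolding hs using spos
      by (simp add: field_simps power2_eq_square)
    have M1: "4 * alpha * (k^2 / K) * ((r^2 * K / alpha + 1 / (r^2 * K / alpha) - 2) / 4 + (1 + cos phi) / 2)
        = k^2 * r^2 + 2 * alpha * k^2 * cos phi / K + alpha^2 * k^2 / (r^2 * K^2)"
      using apos Kpos assms(4) by (simp add: field_simps power2_eq_square)
    have M2: "(k * (r * cos phi) + beta * k * t / K)^2 + k^2 * (r * sin phi)^2
        = k^2 * r^2 + 2 * alpha * k^2 * cos phi / K + alpha^2 * k^2 / (r^2 * K^2)"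
    proof -
      have sn: "(r * sin phi)^2 = r^2 * (1 - (cos phi)^2)" by (simp add: power_mult_distrib sin_squared_eq)
      show ?thesis unfolding sn alpha_def using Kpos assms(4) by (simp add: field_simps power2_eq_square)
    qed
    show ?thesis unfolding d2 h2 g2 s2 K_def[symmetric] M2 M1 by simp
  qed
  have meas: "h' / sqrt (h^2 + 1) = k / K"
  proof -
    have "h' = (c + 1/(c*q^2)) * (k/q)/2" by (simp add: h'_def q2 K_def)
    also have "\<dots> = (c^2*q^2 + 1)/(c*q^2) * (k/q)/2" using cpos qpos
      by (simp add: field_simps power2_eq_square)
    finally have hh: "h' = (c^2*q^2 + 1)/(c*q^2) * (k/q)/2" .
    have gen: "D > 0 \<Longrightarrow> D/(c*q^2)*(k/q)/2 / (D/(2*c*q)) = k/q^2" for D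
      using cpos qpos by (simp add: field_simps power2_eq_square)
    have sq': "sqrt (h^2 + 1) = (c^2*q^2 + 1)/(2*c*q)" unfolding sq s_def using cpos qpos
      by (simp add: field_simps power2_eq_square)
    have "h' / sqrt (h^2 + 1) = k / q^2" unfolding hh sq'
      by (rule gen) (simp add: add_nonneg_pos)
    then show ?thesis by (simp add: q2)
  qed
  have "bessel_J0 (A2 alpha gamma kd r h) / sqrt (h^2 + 1) * h'
      = bessel_J0 (A2 alpha gamma kd r h) * (h' / sqrt (h^2 + 1))" by simp
  also have "\<dots> = k / K * bessel_J0 (sqrt ((k * (r * cos phi) + beta * k * t / (k^2 + kd^2))^2 + k^2 * (r * sin phi)^2))"
    unfolding meas A2_def rad by simp
  finally show ?thesis unfolding psi_G_integrand_def K_def .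
qed


lemma h_deriv_gen:
  fixes c kd k :: real assumes "c > 0" "kd > 0"
  shows "((\<lambda>k. (c * sqrt (k^2 + kd^2) - 1 / (c * sqrt (k^2 + kd^2))) / 2) has_real_derivative
     (c + 1 / (c * (k^2 + kd^2))) * (k / sqrt (k^2 + kd^2)) / 2) (at k)"
proof -
  have K: "k^2 + kd^2 > 0" using assms by (simp add: add_nonneg_pos)
  have Q: "sqrt (k^2 + kd^2) > 0" using K by simp
  have Q2: "sqrt (k^2 + kd^2) * sqrt (k^2 + kd^2) = k^2 + kd^2" using K by simp
  have g: "((\<lambda>k. k^2 + kd^2) has_real_derivative 2*k) (at k)"
    by (auto intro!: derivative_eq_intros)
  have dq0: "((\<lambda>k. sqrt (k^2 + kd^2)) has_real_derivative inverse (sqrt (k^2 + kd^2)) / 2 * (2*k)) (at k)"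
    by (rule DERIV_chain2[OF DERIV_real_sqrt[OF K] g])
  have e0: "inverse Q / 2 * (2*k) = k / Q" for Q :: real
    by (simp add: field_simps)
  have dq: "((\<lambda>k. sqrt (k^2 + kd^2)) has_real_derivative k / sqrt (k^2 + kd^2)) (at k)"
    using dq0 unfolding e0 .
  define q where "q = (\<lambda>k. sqrt (k^2 + kd^2))"
  have dcq: "((\<lambda>k. c * q k) has_real_derivative c * (k / q k)) (at k)"
    unfolding q_def by (rule DERIV_cmult[OF dq])
  have dinv: "((\<lambda>k. inverse (c * q k)) has_real_derivative
      - (c * (k / q k) * inverse ((c * q k) ^ Suc (Suc 0)))) (at k)"
    by (rule DERIV_inverse_fun[OF dcq]) (use Q assms in \<open>simp add: q_def\<close>)
  have "((\<lambda>k. (c * q k - inverse (c * q k)) / 2) has_real_derivative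
      (c * (k / q k) - - (c * (k / q k) * inverse ((c * q k) ^ Suc (Suc 0)))) / 2) (at k)"
    by (rule DERIV_cdivide[OF DERIV_diff[OF dcq dinv]])
  note D = this
  have E: "(c * (k / q k) - - (c * (k / q k) * inverse ((c * q k) ^ Suc (Suc 0)))) / 2
     = (c + 1 / (c * (k^2 + kd^2))) * (k / sqrt (k^2 + kd^2)) / 2"
  proof -
    have gen: "(c * (k / Q) - - (c * (k / Q) * inverse ((c * Q) ^ Suc (Suc 0)))) / 2
       = (c + 1 / (c * Q^2)) * (k / Q) / 2" if QQ: "Q > 0" for Q
    proof -
      have e: "c * inverse ((c * Q) ^ Suc (Suc 0)) = 1 / (c * Q^2)"
        using assms QQ by (simp add: power2_eq_square divide_simps)
      have "(c * (k / Q) - - (c * (k / Q) * inverse ((c * Q) ^ Suc (Suc 0))))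
           = c * (k / Q) + (c * inverse ((c * Q) ^ Suc (Suc 0))) * (k / Q)" by (simp add: algebra_simps)
      also have "\<dots> = (c + 1 / (c * Q^2)) * (k / Q)" unfolding e by (simp add: algebra_simps)
      finally show ?thesis by simp
    qed
    have s2: "(sqrt (k^2 + kd^2))^2 = k^2 + kd^2" using K by simp
    show ?thesis using gen[OF Q] unfolding q_def s2 .
  qed
  show ?thesis using D unfolding E unfolding q_def inverse_eq_divide .
qed

lemma f2_cont: assumes "alpha > 0" shows "continuous_on S (\<lambda>z. bessel_J0 (A2 alpha gamma kd r z) / sqrt (z^2 + 1))"
proof -
  have pos: "sqrt (z^2 + 1) + z > 0" for z :: real
  proof -
    have "\<bar>z\<bar> < sqrt (z^2 + 1)" by (simp add: real_less_rsqrt)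
    then show ?thesis by linarith
  qed
  have p: "alpha * (sqrt (z^2 + 1) + z)^2 \<noteq> 0" for z using pos[of z] assms by simp
  have q: "sqrt (z^2 + 1) \<noteq> 0" for z :: real using add_nonneg_pos[of "z^2" 1] by simp
  show ?thesis unfolding A2_def delta2_def
    apply (intro continuous_intros)
    using p q by auto
qed

lemma main_sub:
  fixes beta kd t r phi :: real
  assumes "beta > 0" "kd > 0" "t > 0" "r > 0"
  defines "alpha \<equiv> beta * r * t" and "gamma \<equiv> cos (phi / 2)"
  defines "f2 \<equiv> (\<lambda>z. bessel_J0 (A2 alpha gamma kd r z) / sqrt (z^2 + 1))"
  defines "z0 \<equiv> (kd^2 * r^2 - alpha) / (sqrt (4 * alpha) * kd * r)"
  shows "set_integrable lborel {z0..} f2 \<and>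
    (LBINT k:{0..}. psi_G_integrand beta kd t (r * cos phi) (r * sin phi) k) = (LBINT z:{z0..}. f2 z)"
proof -
  let ?psi = "psi_G_integrand beta kd t (r * cos phi) (r * sin phi)"
  have apos: "alpha > 0" using assms by (simp add: alpha_def)
  define c where "c = r / sqrt alpha"
  have cpos: "c > 0" using apos assms(4) by (simp add: c_def)
  define q where "q k = sqrt (k^2 + kd^2)" for k
  have Kpos: "k^2 + kd^2 > 0" for k using assms(2) by (simp add: add_nonneg_pos)
  have qpos: "q k > 0" for k using Kpos[of k] by (simp add: q_def)
  define h where "h k = (c * q k - 1 / (c * q k)) / 2" for k
  define h' where "h' k = (c + 1 / (c * (k^2 + kd^2))) * (k / q k) / 2" for k
  have key: "f2 (h k) * h' k = ?psi k" if "k \<ge> 0" for k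
    using key_identity[OF assms(1-4) that, of phi] unfolding f2_def h_def h'_def q_def c_def
      alpha_def gamma_def by simp
  have deriv: "(h has_real_derivative h' k) (at k)" for k
    unfolding h_def[abs_def] h'_def q_def using h_deriv_gen[OF cpos assms(2)] by simp
  have h'cont: "isCont h' k" for k
    unfolding h'_def[abs_def] q_def using Kpos qpos cpos
    by (intro continuous_intros) (auto simp: q_def)
  have h'nn: "0 \<le> h' k" if "0 \<le> k" for k
    unfolding h'_def using that cpos qpos[of k] Kpos[of k] by simp
  have h0: "h 0 = z0"
  proof -
    have "q 0 = kd" using assms(2) by (simp add: q_def)
    moreover have "sqrt (4 * alpha) = 2 * sqrt alpha" by (simp add: real_sqrt_mult)
    ultimately show ?thesis unfolding h_def z0_def c_def using apos assms(2,4)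
      by (simp add: field_simps power2_eq_square)
  qed
  have hcont: "isCont h k" for k using deriv DERIV_isCont by blast
  have limA: "((ereal \<circ> h \<circ> real_of_ereal) \<longlongrightarrow> ereal z0) (at_right (ereal 0))"
    unfolding ereal_tendsto_simps o_assoc[symmetric] ereal_tendsto_simps
    using hcont[of 0] h0 by (simp add: isCont_def filterlim_at_split)
  have htop: "filterlim h at_top at_top"
  proof (rule filterlim_at_top_mono)
    show "filterlim (\<lambda>k. (- 1 / (c * kd) / 2) + c / 2 * k) at_top at_top"
      by (rule filterlim_tendsto_add_at_top[OF tendsto_const filterlim_tendsto_pos_mult_at_top[OF tendsto_const _ filterlim_ident]])
         (use cpos in simp)
    show "\<forall>\<^sub>F k in at_top. (- 1 / (c * kd) / 2) + c / 2 * k \<le> h k"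
      unfolding eventually_at_top_linorder
    proof (intro exI allI impI)
      fix k :: real assume k: "0 \<le> k"
      have "k \<le> q k" unfolding q_def using k by (intro real_le_rsqrt) simp
      moreover have "kd \<le> q k" unfolding q_def using assms(2) by (intro real_le_rsqrt) simp
      ultimately have "c * k \<le> c * q k" "1 / (c * q k) \<le> 1 / (c * kd)"
        using cpos assms(2) by (auto intro!: divide_left_mono mult_left_mono)
      then show "(- 1 / (c * kd) / 2) + c / 2 * k \<le> h k" unfolding h_def by simp
    qed
  qed
  have limB: "((ereal \<circ> h \<circ> real_of_ereal) \<longlongrightarrow> \<infinity>) (at_left \<infinity>)"
    unfolding o_assoc[symmetric] ereal_tendsto_simps at_left_PInf filterlim_filtermap
    using htop by (simp add: o_def tendsto_PInfty_eq_at_top)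
  have PI: "set_integrable lborel {0..} ?psi" by (rule psi_integrable[OF assms(1-4)])
  have PI': "set_integrable lborel {0<..} ?psi"
    by (rule set_integrable_subset[OF PI]) auto
  have f2meas: "f2 \<in> borel_measurable borel" unfolding f2_def
    by (rule borel_measurable_continuous_onI) (rule f2_cont[OF apos])
  have absint: "set_integrable lborel (einterval (ereal 0) \<infinity>) (\<lambda>k. \<bar>f2 (h k)\<bar> * h' k)"
  proof -
    have "set_integrable lborel {0<..} (\<lambda>k. \<bar>?psi k\<bar>)" by (rule set_integrable_abs[OF PI'])
    moreover have "\<bar>?psi k\<bar> = \<bar>f2 (h k)\<bar> * h' k" if "k \<in> {0<..}" for k
    proof -
      have "\<bar>?psi k\<bar> = \<bar>f2 (h k) * h' k\<bar>" using key[of k] that by simp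
      also have "\<dots> = \<bar>f2 (h k)\<bar> * h' k" using h'nn[of k] that by (simp add: abs_mult)
      finally show ?thesis .
    qed
    ultimately show ?thesis by (subst set_integrable_cong[where A'="{0<..}" and f'="\<lambda>k. \<bar>?psi k\<bar>"]) auto
  qed
  have f2cu: "continuous_on UNIV f2" unfolding f2_def by (rule f2_cont[OF apos])
  have f2c: "isCont f2 z" for z
    using f2cu by (simp add: continuous_on_eq_continuous_at)
  have f2ac: "isCont (\<lambda>z. \<bar>f2 z\<bar>) z" for z using isCont_rabs[OF f2c] by simp
  have S1: "set_integrable lborel (einterval (ereal z0) \<infinity>) (\<lambda>z. \<bar>f2 z\<bar>)"
  proof (rule interval_integral_substitution_nonneg(1)[where g=h and g'=h' and a="ereal 0" and b=\<infinity>])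
    show "((ereal \<circ> h \<circ> real_of_ereal) \<longlongrightarrow> ereal z0) (at_right (ereal 0))" by (rule limA)
    show "((ereal \<circ> h \<circ> real_of_ereal) \<longlongrightarrow> \<infinity>) (at_left \<infinity>)" by (rule limB)
    show "set_integrable lborel (einterval (ereal 0) \<infinity>) (\<lambda>x. \<bar>f2 (h x)\<bar> * h' x)" by (rule absint)
    show "ereal 0 < \<infinity>" by simp
    fix x
    show "(h has_real_derivative h' x) (at x)" by (rule deriv)
    show "isCont (\<lambda>z. \<bar>f2 z\<bar>) (h x)" by (rule f2ac)
    show "isCont h' x" by (rule h'cont)
    show "0 \<le> \<bar>f2 (h x)\<bar>" by simp
    assume "ereal 0 \<le> ereal x"
    then show "0 \<le> h' x" by (intro h'nn) simp
  qed
  have S2: "set_integrable lborel {z0<..} f2"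
  proof -
    have m: "f2 \<in> borel_measurable lborel" using f2meas by simp
    show ?thesis using S1 set_integrable_abs_iff'[OF m, of "{z0<..}"] by simp
  qed
  have S3: "set_integrable lborel {z0..} f2"
    by (subst set_integrable_discrete_difference[where X="{z0}" and B="{z0<..}"]) (auto simp: S2)
  have int3: "set_integrable lborel (einterval (ereal 0) \<infinity>) (\<lambda>k. h' k *\<^sub>R f2 (h k))"
  proof -
    have "h' k *\<^sub>R f2 (h k) = ?psi k" if "k \<in> {0<..}" for k
      using key[of k] that by (simp add: mult.commute)
    then show ?thesis using PI' by (subst set_integrable_cong[where A'="{0<..}" and f'="?psi"]) auto
  qed
  have EQ: "(LBINT x=ereal z0..\<infinity>. f2 x) = (LBINT k=ereal 0..\<infinity>. h' k *\<^sub>R f2 (h k))"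
  proof (rule interval_integral_substitution_integrable[where g=h and g'=h' and a="ereal 0" and b=\<infinity>])
    show "((ereal \<circ> h \<circ> real_of_ereal) \<longlongrightarrow> ereal z0) (at_right (ereal 0))" by (rule limA)
    show "((ereal \<circ> h \<circ> real_of_ereal) \<longlongrightarrow> \<infinity>) (at_left \<infinity>)" by (rule limB)
    show "set_integrable lborel (einterval (ereal 0) \<infinity>) (\<lambda>x. h' x *\<^sub>R f2 (h x))" by (rule int3)
    show "set_integrable lborel (einterval (ereal z0) \<infinity>) f2" using S2 by simp
    show "ereal 0 < \<infinity>" by simp
    fix x
    show "(h has_real_derivative h' x) (at x)" by (rule deriv)
    show "isCont f2 (h x)" by (rule f2c)
    show "isCont h' x" by (rule h'cont)
    assume "ereal 0 \<le> ereal x"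
    then show "0 \<le> h' x" by (intro h'nn) simp
  qed
  have L: "(LBINT x=ereal z0..\<infinity>. f2 x) = (LBINT z:{z0..}. f2 z)"
    unfolding interval_integral_to_infinity_eq
    by (rule set_integral_discrete_difference[where X="{z0}"]) auto
  have R: "(LBINT k=ereal 0..\<infinity>. h' k *\<^sub>R f2 (h k)) = (LBINT k:{0..}. ?psi k)"
  proof -
    have "(LBINT k=ereal 0..\<infinity>. h' k *\<^sub>R f2 (h k)) = (LBINT k:{0<..}. h' k *\<^sub>R f2 (h k))"
      by (rule interval_integral_to_infinity_eq)
    also have "\<dots> = (LBINT k:{0<..}. ?psi k)"
      using key by (intro set_lebesgue_integral_cong) (auto simp: mult.commute)
    also have "\<dots> = (LBINT k:{0..}. ?psi k)"
      by (rule set_integral_discrete_difference[where X="{0}"]) auto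
    finally show ?thesis .
  qed
  show ?thesis using S3 EQ L R by simp
qed


theorem proposition3p3:
  fixes beta kd N t r phi :: real
  assumes "beta > 0" and "kd > 0" and "t > 0" and "r > 0"
  defines "x \<equiv> r * cos phi" and "y \<equiv> r * sin phi"
      and "alpha \<equiv> beta * r * t" and "gamma \<equiv> cos (phi / 2)"
  defines "f1 \<equiv> (\<lambda>z. bessel_J0 (A1 alpha gamma kd r z) / sqrt (z^2 + 1))"
      and "f2 \<equiv> (\<lambda>z. bessel_J0 (A2 alpha gamma kd r z) / sqrt (z^2 + 1))"
      and "z01 \<equiv> (alpha - kd^2 * r^2) / (sqrt (4 * alpha) * kd * r)"
      and "z02 \<equiv> (kd^2 * r^2 - alpha) / (sqrt (4 * alpha) * kd * r)"
  shows
    "set_integrable lborel {0..} (psi_G_integrand beta kd t x y)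
     \<and> (r < beta * t / kd^2 \<longrightarrow>
          z01 > 0
          \<and> set_integrable lborel {0..z01} f1
          \<and> set_integrable lborel {0..} f2
          \<and> set_integrable lborel {-z01..} f2
          \<and> psi_G N beta kd t x y
              = - (N / (2*pi)) * ((LBINT z:{0..z01}. f1 z) + (LBINT z:{0..}. f2 z))
          \<and> psi_G N beta kd t x y = - (N / (2*pi)) * (LBINT z:{-z01..}. f2 z))
     \<and> (r > beta * t / kd^2 \<longrightarrow>
          z02 > 0
          \<and> set_integrable lborel {z02..} f2
          \<and> psi_G N beta kd t x y = - (N / (2*pi)) * (LBINT z:{z02..}. f2 z))"
proof -
  have PI: "set_integrable lborel {0..} (psi_G_integrand beta kd t x y)"
    unfolding x_def y_def by (rule psi_integrable[OF assms(1-4)])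
  have MS: "set_integrable lborel {z02..} f2 \<and>
    (LBINT k:{0..}. psi_G_integrand beta kd t x y k) = (LBINT z:{z02..}. f2 z)"
    using main_sub[OF assms(1-4), of phi]
    unfolding x_def y_def alpha_def gamma_def f2_def z02_def by simp
  have PG: "psi_G N beta kd t x y = - (N / (2*pi)) * (LBINT z:{z02..}. f2 z)"
    unfolding psi_G_def using MS by simp
  have apos: "alpha > 0" using assms by (simp add: alpha_def)
  have den: "sqrt (4 * alpha) * kd * r > 0" using apos assms by simp
  have z12: "- z01 = z02" unfolding z01_def z02_def by (simp add: minus_divide_left)
  have f2cu: "continuous_on UNIV f2" unfolding f2_def by (rule f2_cont[OF apos])
  have f1f2: "f1 z = f2 (- z)" for z
    unfolding f1_def f2_def A1_def A2_def delta1_def delta2_def by simp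
  have near: "r < beta * t / kd^2 \<longrightarrow>
          z01 > 0
          \<and> set_integrable lborel {0..z01} f1
          \<and> set_integrable lborel {0..} f2
          \<and> set_integrable lborel {-z01..} f2
          \<and> psi_G N beta kd t x y
              = - (N / (2*pi)) * ((LBINT z:{0..z01}. f1 z) + (LBINT z:{0..}. f2 z))
          \<and> psi_G N beta kd t x y = - (N / (2*pi)) * (LBINT z:{-z01..}. f2 z)"
  proof
    assume "r < beta * t / kd^2"
    then have "r * kd^2 < beta * t" using assms by (simp add: field_simps)
    then have "kd^2 * r^2 < alpha" unfolding alpha_def using assms(4)
      by (simp add: power2_eq_square) (metis mult.assoc mult.commute mult_strict_left_mono)
    then have z01p: "z01 > 0" unfolding z01_def using den by simp
    have f1c: "continuous_on {0..z01} f1"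
    proof -
      have "continuous_on {0..z01} (\<lambda>z. f2 (- z))"
        by (rule continuous_on_compose2[OF f2cu]) (auto intro!: continuous_intros)
      then show ?thesis by (simp add: f1f2)
    qed
    have I1: "set_integrable lborel {0..z01} f1" by (rule borel_integrable_atLeastAtMost'[OF f1c])
    have I3: "set_integrable lborel {-z01..} f2" using MS z12 by simp
    have I2: "set_integrable lborel {0..} f2"
      by (rule set_integrable_subset[OF I3]) (use z01p in auto)
    have I4: "set_integrable lborel {-z01..<0} f2"
      by (rule set_integrable_subset[OF I3]) auto
    have split: "(LBINT z:{-z01..}. f2 z) = (LBINT z:{-z01..<0}. f2 z) + (LBINT z:{0..}. f2 z)"
    proof -
      have "{-z01..} = {-z01..<0} \<union> {0::real..}" using z01p by auto
      moreover have "{-z01..<0} \<inter> {0::real..} = {}" by auto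
      ultimately show ?thesis using set_integral_Un[of "{-z01..<0}" "{0::real..}" lborel f2] I4 I2 by simp
    qed
    have refl: "(LBINT z:{-z01..<0}. f2 z) = (LBINT z:{0..z01}. f1 z)"
    proof -
      have "(LBINT z:{-z01..<0}. f2 z) = (LBINT z:{-z01..0}. f2 z)"
        by (rule set_integral_discrete_difference[where X="{0}"]) auto
      also have "\<dots> = (LBINT z:{z. - z \<in> {-z01..0}}. f2 (- z))"
        by (rule set_integral_reflect)
      also have "{z. - z \<in> {-z01..0}} = {0..z01}" by auto
      finally show ?thesis by (simp add: f1f2)
    qed
    show "z01 > 0
          \<and> set_integrable lborel {0..z01} f1
          \<and> set_integrable lborel {0..} f2
          \<and> set_integrable lborel {-z01..} f2
          \<and> psi_G N beta kd t x y
              = - (N / (2*pi)) * ((LBINT z:{0..z01}. f1 z) + (LBINT z:{0..}. f2 z))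
          \<and> psi_G N beta kd t x y = - (N / (2*pi)) * (LBINT z:{-z01..}. f2 z)"
      using z01p I1 I2 I3 PG z12 split refl by simp
  qed
  have far: "r > beta * t / kd^2 \<longrightarrow>
          z02 > 0
          \<and> set_integrable lborel {z02..} f2
          \<and> psi_G N beta kd t x y = - (N / (2*pi)) * (LBINT z:{z02..}. f2 z)"
  proof
    assume "r > beta * t / kd^2"
    then have "r * kd^2 > beta * t" using assms by (simp add: field_simps)
    then have "kd^2 * r^2 > alpha" unfolding alpha_def using assms(4)
      by (simp add: power2_eq_square) (metis mult.assoc mult.commute mult_strict_left_mono)
    then have "z02 > 0" unfolding z02_def using den by simp
    then show "z02 > 0
          \<and> set_integrable lborel {z02..} f2
          \<and> psi_G N beta kd t x y = - (N / (2*pi)) * (LBINT z:{z02..}. f2 z)"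
      using MS PG by simp
  qed
  show ?thesis using PI near far by blast
qed


end
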